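(* Let $T_{\mathrm{Prog}}=(V,\mathit{Init},\mathit{TR})$ with $V=\{pc,x,z_1,z_2,y_1,y_2\}$ be the transition system defined as follows (locations are encoded as integers $\mathrm{start}=0$, $\mathrm{loop}_1=1$, $\mathrm{loop}_2=2$, $\mathrm{end}=3$): $\mathit{Init} := pc=\mathrm{start}\wedge x>0\wedge z_1=x\wedge z_2=2x\wedge y_1=0\wedge y_2=0$, and $\mathit{TR}$ is the disjunction of the following cases, where in each case every variable not mentioned keeps its value ($v'=v$): (1) $pc\in\{\mathrm{start},\mathrm{loop}_1\}\wedge z_1>0\wedge pc'=\mathrm{loop}_1\wedge z_1'=z_1-1\wedge y_1'=y_1+x$; (2) $pc\in\{\mathrm{start},\mathrm{loop}_1\}\wedge z_1\le 0\wedge pc'=\mathrm{loop}_2$; (3) $pc=\mathrm{loop}_2\wedge z_2>0\wedge pc'=\mathrm{loop}_2\wedge z_2'=z_2-1\wedge y_2'=y_2+x$; (4) $pc=\mathrm{loop}_2\wedge z_2\le 0\wedge pc'=\mathrm{end}$; (5) $pc=\mathrm{end}\wedge pc'=\mathrm{end}$. (This encodes the program which, on input $x>0$, computes $y_1=x^2$ by adding $x$ to $y_1$ exactly $x$ times, then computes $y_2=2x^2$ by adding $x$ to $y_2$ exactly $2x$ times, and then asserts $y_2=2y_1$.) Let $P := (pc=\mathrm{end})\to(y_2=2y_1)$. Then $T_{\mathrm{Prog}}\models P$, but there is no inductive invariant for $T_{\mathrm{Prog}}$ and $P$ that is a QFLIA formula over $V$.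
   Context: QFLIA (quantifier-free linear integer arithmetic) formulas are built from integer-valued variables, integer constants, addition, multiplication by integer constants, the relations $=,<,\le$, and Boolean connectives, with no quantifiers; all variables range over $\mathbb{Z}$. A transition system is a tuple $T=(V,\mathit{Init},\mathit{TR})$ where $V$ is a finite set of integer variables, $\mathit{Init}$ is a QFLIA formula over $V$, and $\mathit{TR}$ is a QFLIA formula over $V\uplus V'$, where $V'=\{v' : v\in V\}$ is a primed copy of $V$. A state is an assignment $V\to\mathbb{Z}$. The initial states are those satisfying $\mathit{Init}$. A pair of states $(s,t)$ is a transition if $\mathit{TR}$ holds when unprimed variables take their values from $s$ and primed variables from $t$. Reachable states are those reachable from an initial state by finitely many transitions. A safety property is a QFLIA formula $P$ over $V$. We write $T\models P$ if every reachable state satisfies $P$. An inductive invariant for $T$ and $P$ is a formula $I$ over $V$ such that: (i) $\mathit{Init}\to I$ is valid; (ii) $I\wedge \mathit{TR}\to I'$ is valid, where $I'$ is obtained from $I$ by replacing each $v\in V$ with $v'$; and (iii) $I\to P$ is valid. *)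

theory Defs
  imports Main
begin

datatype 'v lterm =
    LVar 'v
  | LConst int
  | LAdd "'v lterm" "'v lterm"
  | LCMul int "'v lterm"

datatype 'v qflia =
    FTrue
  | FFalse
  | FEq "'v lterm" "'v lterm"
  | FLt "'v lterm" "'v lterm"
  | FLe "'v lterm" "'v lterm"
  | FNot "'v qflia"
  | FAnd "'v qflia" "'v qflia"
  | FOr "'v qflia" "'v qflia"
  | FImp "'v qflia" "'v qflia"

fun lterm_val :: "('v \<Rightarrow> int) \<Rightarrow> 'v lterm \<Rightarrow> int" where
  "lterm_val s (LVar v) = s v"
| "lterm_val s (LConst c) = c"
| "lterm_val s (LAdd a b) = lterm_val s a + lterm_val s b"
| "lterm_val s (LCMul c a) = c * lterm_val s a"

fun holds :: "('v \<Rightarrow> int) \<Rightarrow> 'v qflia \<Rightarrow> bool" where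
  "holds s FTrue = True"
| "holds s FFalse = False"
| "holds s (FEq a b) = (lterm_val s a = lterm_val s b)"
| "holds s (FLt a b) = (lterm_val s a < lterm_val s b)"
| "holds s (FLe a b) = (lterm_val s a \<le> lterm_val s b)"
| "holds s (FNot f) = (\<not> holds s f)"
| "holds s (FAnd f g) = (holds s f \<and> holds s g)"
| "holds s (FOr f g) = (holds s f \<or> holds s g)"
| "holds s (FImp f g) = (holds s f \<longrightarrow> holds s g)"

text \<open>The variable set V = {pc, x, z1, z2, y1, y2}; a state is an assignment V \<Rightarrow> int.
  Locations: start = 0, loop1 = 1, loop2 = 2, end = 3.\<close>
datatype var = PC | X | Z1 | Z2 | Y1 | Y2

type_synonym state = "var \<Rightarrow> int"

definition Init_Prog :: "state \<Rightarrow> bool" where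
  "Init_Prog s \<longleftrightarrow> s PC = 0 \<and> s X > 0 \<and> s Z1 = s X \<and> s Z2 = 2 * s X
                  \<and> s Y1 = 0 \<and> s Y2 = 0"

definition TR_Prog :: "state \<Rightarrow> state \<Rightarrow> bool" where
  "TR_Prog s t \<longleftrightarrow>
     ((s PC = 0 \<or> s PC = 1) \<and> s Z1 > 0 \<and> t PC = 1 \<and> t Z1 = s Z1 - 1 \<and> t Y1 = s Y1 + s X
        \<and> t X = s X \<and> t Z2 = s Z2 \<and> t Y2 = s Y2)
   \<or> ((s PC = 0 \<or> s PC = 1) \<and> s Z1 \<le> 0 \<and> t PC = 2
        \<and> t X = s X \<and> t Z1 = s Z1 \<and> t Z2 = s Z2 \<and> t Y1 = s Y1 \<and> t Y2 = s Y2)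
   \<or> (s PC = 2 \<and> s Z2 > 0 \<and> t PC = 2 \<and> t Z2 = s Z2 - 1 \<and> t Y2 = s Y2 + s X
        \<and> t X = s X \<and> t Z1 = s Z1 \<and> t Y1 = s Y1)
   \<or> (s PC = 2 \<and> s Z2 \<le> 0 \<and> t PC = 3
        \<and> t X = s X \<and> t Z1 = s Z1 \<and> t Z2 = s Z2 \<and> t Y1 = s Y1 \<and> t Y2 = s Y2)
   \<or> (s PC = 3 \<and> t PC = 3
        \<and> t X = s X \<and> t Z1 = s Z1 \<and> t Z2 = s Z2 \<and> t Y1 = s Y1 \<and> t Y2 = s Y2)"

definition P_Prog :: "state \<Rightarrow> bool" where
  "P_Prog s \<longleftrightarrow> (s PC = 3 \<longrightarrow> s Y2 = 2 * s Y1)"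

inductive reachable_Prog :: "state \<Rightarrow> bool" where
  init: "Init_Prog s \<Longrightarrow> reachable_Prog s"
| step: "reachable_Prog s \<Longrightarrow> TR_Prog s t \<Longrightarrow> reachable_Prog t"

definition inductive_invariant_Prog :: "var qflia \<Rightarrow> bool" where
  "inductive_invariant_Prog I \<longleftrightarrow>
     (\<forall>s. Init_Prog s \<longrightarrow> holds s I)
   \<and> (\<forall>s t. holds s I \<and> TR_Prog s t \<longrightarrow> holds t I)
   \<and> (\<forall>s. holds s I \<longrightarrow> P_Prog s)"

end

theory Submission
  imports Defs
begin

definition Inv :: "state \<Rightarrow> bool" where
  "Inv s \<longleftrightarrow> s X > 0 \<and>
    ((s PC = 0 \<and> s Z1 = s X \<and> s Z2 = 2 * s X \<and> s Y1 = 0 \<and> s Y2 = 0)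
   \<or> (s PC = 1 \<and> 0 \<le> s Z1 \<and> s Z1 < s X \<and> s Z2 = 2 * s X \<and> s Y1 = s X * (s X - s Z1) \<and> s Y2 = 0)
   \<or> (s PC = 2 \<and> s Z1 = 0 \<and> s Y1 = s X * s X \<and> 0 \<le> s Z2 \<and> s Z2 \<le> 2 * s X
        \<and> s Y2 = s X * (2 * s X - s Z2))
   \<or> (s PC = 3 \<and> s Y1 = s X * s X \<and> s Y2 = 2 * s X * s X))"

lemma Inv_step: assumes "Inv s" "TR_Prog s t" shows "Inv t"
proof -
  from assms(2) consider
    (a) "(s PC = 0 \<or> s PC = 1) \<and> s Z1 > 0 \<and> t PC = 1 \<and> t Z1 = s Z1 - 1 \<and> t Y1 = s Y1 + s X
        \<and> t X = s X \<and> t Z2 = s Z2 \<and> t Y2 = s Y2"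
   | (b) "(s PC = 0 \<or> s PC = 1) \<and> s Z1 \<le> 0 \<and> t PC = 2
        \<and> t X = s X \<and> t Z1 = s Z1 \<and> t Z2 = s Z2 \<and> t Y1 = s Y1 \<and> t Y2 = s Y2"
   | (c) "s PC = 2 \<and> s Z2 > 0 \<and> t PC = 2 \<and> t Z2 = s Z2 - 1 \<and> t Y2 = s Y2 + s X
        \<and> t X = s X \<and> t Z1 = s Z1 \<and> t Y1 = s Y1"
   | (d) "s PC = 2 \<and> s Z2 \<le> 0 \<and> t PC = 3
        \<and> t X = s X \<and> t Z1 = s Z1 \<and> t Z2 = s Z2 \<and> t Y1 = s Y1 \<and> t Y2 = s Y2"
   | (e) "s PC = 3 \<and> t PC = 3
        \<and> t X = s X \<and> t Z1 = s Z1 \<and> t Z2 = s Z2 \<and> t Y1 = s Y1 \<and> t Y2 = s Y2"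
    unfolding TR_Prog_def by metis
  then show ?thesis
  proof cases
    case a
    have h: "s PC = 0 \<and> s Z1 = s X \<and> s Y1 = 0 \<and> s Z2 = 2 * s X \<and> s Y2 = 0
       \<or> s PC = 1 \<and> s Z1 < s X \<and> s Z2 = 2 * s X \<and> s Y1 = s X * (s X - s Z1) \<and> s Y2 = 0"
      using assms(1) a unfolding Inv_def by auto
    have x: "s X > 0" using assms(1) unfolding Inv_def by blast
    have "t Y1 = t X * (t X - t Z1)"
    proof -
      have e: "t Y1 = s Y1 + s X" "t X = s X" "t Z1 = s Z1 - 1" using a by auto
      have y: "s Y1 = s X * (s X - s Z1)" using h by auto
      have "s X * (s X - (s Z1 - 1)) = s X * (s X - s Z1) + s X" by (simp add: algebra_simps)
      then show ?thesis unfolding e y by simp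
    qed
    moreover have "0 \<le> t Z1 \<and> t Z1 < t X \<and> t Z2 = 2 * t X \<and> t Y2 = 0 \<and> t PC = 1 \<and> t X > 0"
      using a h x by auto
    ultimately show ?thesis unfolding Inv_def by blast
  next
    case b
    have "s Z1 = 0 \<and> s Y1 = s X * s X \<and> s Z2 = 2 * s X \<and> s Y2 = 0 \<and> s X > 0"
      using assms(1) b unfolding Inv_def by auto
    then show ?thesis using b unfolding Inv_def by auto
  next
    case c
    have h: "s Z1 = 0 \<and> s Y1 = s X * s X \<and> s Z2 \<le> 2 * s X \<and> s Y2 = s X * (2 * s X - s Z2) \<and> s X > 0"
      using assms(1) c unfolding Inv_def by auto
    have "t Y2 = t X * (2 * t X - t Z2)"
    proof -
      have e: "t Y2 = s Y2 + s X" "t X = s X" "t Z2 = s Z2 - 1" using c by auto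
      have y: "s Y2 = s X * (2 * s X - s Z2)" using h by auto
      have "s X * (2 * s X - (s Z2 - 1)) = s X * (2 * s X - s Z2) + s X" by (simp add: algebra_simps)
      then show ?thesis unfolding e y by simp
    qed
    moreover have "t PC = 2 \<and> t Z1 = 0 \<and> t Y1 = t X * t X \<and> 0 \<le> t Z2 \<and> t Z2 \<le> 2 * t X \<and> t X > 0"
      using c h by auto
    ultimately show ?thesis unfolding Inv_def by blast
  next
    case d
    have "s Z2 = 0 \<and> s Y1 = s X * s X \<and> s Y2 = s X * (2 * s X - s Z2) \<and> s X > 0"
      using assms(1) d unfolding Inv_def by auto
    then have "t PC = 3 \<and> t Y1 = t X * t X \<and> t Y2 = 2 * t X * t X \<and> t X > 0" using d by auto
    then show ?thesis unfolding Inv_def by blast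
  next
    case e
    then show ?thesis using assms(1) unfolding Inv_def by auto
  qed
qed

lemma reach_Inv: "reachable_Prog s \<Longrightarrow> Inv s"
proof (induction rule: reachable_Prog.induct)
  case (init s)
  then show ?case by (auto simp: Inv_def Init_Prog_def)
next
  case (step s t)
  then show ?case using Inv_step by blast
qed

fun coef :: "('v \<Rightarrow> int) \<Rightarrow> 'v lterm \<Rightarrow> int" where
  "coef d (LVar v) = d v"
| "coef d (LConst c) = 0"
| "coef d (LAdd a b) = coef d a + coef d b"
| "coef d (LCMul c a) = c * coef d a"

lemma lv_shift: "lterm_val (\<lambda>v. s v + k * d v) e = lterm_val s e + k * coef d e"
  by (induction e) (auto simp: algebra_simps)

lemma coef_lin: "coef (\<lambda>v. d1 v + k * d2 v) e = coef d1 e + k * coef d2 e"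
  by (induction e) (auto simp: algebra_simps)

lemma lv_shift1: "lterm_val (\<lambda>v. s v + d v) e = lterm_val s e + coef d e"
  by (induction e) (auto simp: algebra_simps)

definition okat :: "('v \<Rightarrow> int) \<Rightarrow> ('v \<Rightarrow> int) \<Rightarrow> ('v \<Rightarrow> int) \<Rightarrow> 'v lterm \<Rightarrow> 'v lterm \<Rightarrow> bool" where
  "okat b b' d e1 e2 \<longleftrightarrow> coef d e1 \<noteq> coef d e2 \<or>
     lterm_val b' e1 - lterm_val b' e2 = lterm_val b e1 - lterm_val b e2"

fun ok :: "('v \<Rightarrow> int) \<Rightarrow> ('v \<Rightarrow> int) \<Rightarrow> ('v \<Rightarrow> int) \<Rightarrow> 'v qflia \<Rightarrow> bool" where
  "ok b b' d FTrue = True"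
| "ok b b' d FFalse = True"
| "ok b b' d (FEq e1 e2) = okat b b' d e1 e2"
| "ok b b' d (FLt e1 e2) = okat b b' d e1 e2"
| "ok b b' d (FLe e1 e2) = okat b b' d e1 e2"
| "ok b b' d (FNot f) = ok b b' d f"
| "ok b b' d (FAnd f g) = (ok b b' d f \<and> ok b b' d g)"
| "ok b b' d (FOr f g) = (ok b b' d f \<and> ok b b' d g)"
| "ok b b' d (FImp f g) = (ok b b' d f \<and> ok b b' d g)"

lemma int_sign:
  fixes A B B' :: int
  assumes "A \<noteq> 0"
  shows "\<exists>N. \<forall>a\<ge>N. (A*a + B < 0 \<longleftrightarrow> A*a + B' < 0) \<and> (A*a+B = 0 \<longleftrightarrow> A*a+B' = 0)
                 \<and> (A*a + B \<le> 0 \<longleftrightarrow> A*a + B' \<le> 0)"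
proof (intro exI allI impI)
  fix a :: int assume a: "a \<ge> \<bar>B\<bar> + \<bar>B'\<bar> + 1"
  have "A*a \<ge> a \<or> A*a \<le> -a"
  proof (cases "A > 0")
    case True
    then have "A \<ge> 1" by simp
    then have "A*a \<ge> 1*a" using a by (intro mult_right_mono) auto
    then show ?thesis by simp
  next
    case False
    then have "A \<le> -1" using assms by simp
    then have "A*a \<le> (-1)*a" using a by (intro mult_right_mono) auto
    then show ?thesis by simp
  qed
  then show "(A*a + B < 0 \<longleftrightarrow> A*a + B' < 0) \<and> (A*a+B = 0 \<longleftrightarrow> A*a+B' = 0)
                 \<and> (A*a + B \<le> 0 \<longleftrightarrow> A*a + B' \<le> 0)" using a by (smt (verit))
qed

lemma atom_ev:
  assumes "okat b b' d e1 e2"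
  shows "\<exists>N. \<forall>a\<ge>N.
    (lterm_val (\<lambda>v. b v + a * d v) e1 < lterm_val (\<lambda>v. b v + a * d v) e2 \<longleftrightarrow>
     lterm_val (\<lambda>v. b' v + a * d v) e1 < lterm_val (\<lambda>v. b' v + a * d v) e2) \<and>
    (lterm_val (\<lambda>v. b v + a * d v) e1 = lterm_val (\<lambda>v. b v + a * d v) e2 \<longleftrightarrow>
     lterm_val (\<lambda>v. b' v + a * d v) e1 = lterm_val (\<lambda>v. b' v + a * d v) e2) \<and>
    (lterm_val (\<lambda>v. b v + a * d v) e1 \<le> lterm_val (\<lambda>v. b v + a * d v) e2 \<longleftrightarrow>
     lterm_val (\<lambda>v. b' v + a * d v) e1 \<le> lterm_val (\<lambda>v. b' v + a * d v) e2)"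
proof (cases "coef d e1 = coef d e2")
  case True
  with assms have "lterm_val b' e1 - lterm_val b' e2 = lterm_val b e1 - lterm_val b e2"
    by (simp add: okat_def)
  then show ?thesis using True by (auto simp: lv_shift)
next
  case False
  define A where "A = coef d e1 - coef d e2"
  define B where "B = lterm_val b e1 - lterm_val b e2"
  define B' where "B' = lterm_val b' e1 - lterm_val b' e2"
  have "A \<noteq> 0" using False A_def by simp
  from int_sign[OF this, of B B'] obtain N where N:
    "\<forall>a\<ge>N. (A*a + B < 0 \<longleftrightarrow> A*a + B' < 0) \<and> (A*a+B = 0 \<longleftrightarrow> A*a+B' = 0)
                 \<and> (A*a + B \<le> 0 \<longleftrightarrow> A*a + B' \<le> 0)" by blast
  show ?thesis
  proof (intro exI allI impI)
    fix a assume "a \<ge> N"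
    with N have h: "(A*a + B < 0 \<longleftrightarrow> A*a + B' < 0) \<and> (A*a+B = 0 \<longleftrightarrow> A*a+B' = 0)
                 \<and> (A*a + B \<le> 0 \<longleftrightarrow> A*a + B' \<le> 0)" by blast
    have e: "\<And>x y :: int. (x < y \<longleftrightarrow> x - y < 0) \<and> (x = y \<longleftrightarrow> x - y = 0) \<and> (x \<le> y \<longleftrightarrow> x - y \<le> 0)"
      by auto
    have d1: "lterm_val (\<lambda>v. b v + a * d v) e1 - lterm_val (\<lambda>v. b v + a * d v) e2 = A*a + B"
      by (simp add: lv_shift A_def B_def algebra_simps)
    have d2: "lterm_val (\<lambda>v. b' v + a * d v) e1 - lterm_val (\<lambda>v. b' v + a * d v) e2 = A*a + B'"
      by (simp add: lv_shift A_def B'_def algebra_simps)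
    show "(lterm_val (\<lambda>v. b v + a * d v) e1 < lterm_val (\<lambda>v. b v + a * d v) e2 \<longleftrightarrow>
     lterm_val (\<lambda>v. b' v + a * d v) e1 < lterm_val (\<lambda>v. b' v + a * d v) e2) \<and>
    (lterm_val (\<lambda>v. b v + a * d v) e1 = lterm_val (\<lambda>v. b v + a * d v) e2 \<longleftrightarrow>
     lterm_val (\<lambda>v. b' v + a * d v) e1 = lterm_val (\<lambda>v. b' v + a * d v) e2) \<and>
    (lterm_val (\<lambda>v. b v + a * d v) e1 \<le> lterm_val (\<lambda>v. b v + a * d v) e2 \<longleftrightarrow>
     lterm_val (\<lambda>v. b' v + a * d v) e1 \<le> lterm_val (\<lambda>v. b' v + a * d v) e2)"
      using h d1 d2 by (smt (verit))
  qed
qed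

lemma holds_ev:
  "ok b b' d f \<Longrightarrow> \<exists>N. \<forall>a\<ge>N. holds (\<lambda>v. b v + a * d v) f = holds (\<lambda>v. b' v + a * d v) f"
proof (induction f)
  case (FEq e1 e2) then show ?case using atom_ev[of b b' d e1 e2] by auto
next
  case (FLt e1 e2) then show ?case using atom_ev[of b b' d e1 e2] by auto
next
  case (FLe e1 e2) then show ?case using atom_ev[of b b' d e1 e2] by auto
next
  case (FNot f) then show ?case by auto
next
  case (FAnd f g)
  then obtain N1 N2 where "\<forall>a\<ge>N1. holds (\<lambda>v. b v + a * d v) f = holds (\<lambda>v. b' v + a * d v) f"
    "\<forall>a\<ge>N2. holds (\<lambda>v. b v + a * d v) g = holds (\<lambda>v. b' v + a * d v) g" by auto
  then show ?case by (intro exI[of _ "max N1 N2"]) auto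
next
  case (FOr f g)
  then obtain N1 N2 where "\<forall>a\<ge>N1. holds (\<lambda>v. b v + a * d v) f = holds (\<lambda>v. b' v + a * d v) f"
    "\<forall>a\<ge>N2. holds (\<lambda>v. b v + a * d v) g = holds (\<lambda>v. b' v + a * d v) g" by auto
  then show ?case by (intro exI[of _ "max N1 N2"]) auto
next
  case (FImp f g)
  then obtain N1 N2 where "\<forall>a\<ge>N1. holds (\<lambda>v. b v + a * d v) f = holds (\<lambda>v. b' v + a * d v) f"
    "\<forall>a\<ge>N2. holds (\<lambda>v. b v + a * d v) g = holds (\<lambda>v. b' v + a * d v) g" by auto
  then show ?case by (intro exI[of _ "max N1 N2"]) auto
qed auto

fun bnd :: "('v \<Rightarrow> int) \<Rightarrow> 'v qflia \<Rightarrow> int" where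
  "bnd d FTrue = 0"
| "bnd d FFalse = 0"
| "bnd d (FEq e1 e2) = \<bar>coef d e1 - coef d e2\<bar>"
| "bnd d (FLt e1 e2) = \<bar>coef d e1 - coef d e2\<bar>"
| "bnd d (FLe e1 e2) = \<bar>coef d e1 - coef d e2\<bar>"
| "bnd d (FNot f) = bnd d f"
| "bnd d (FAnd f g) = bnd d f + bnd d g"
| "bnd d (FOr f g) = bnd d f + bnd d g"
| "bnd d (FImp f g) = bnd d f + bnd d g"

lemma bnd_nonneg: "bnd d f \<ge> 0"
  by (induction f) auto

lemma okat_big:
  assumes "c > \<bar>coef d0 e1 - coef d0 e2\<bar>"
  shows "okat b (\<lambda>v. b v + eY v) (\<lambda>v. d0 v + c * eY v) e1 e2"
proof -
  define p where "p = coef d0 e1 - coef d0 e2"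
  define r where "r = coef eY e1 - coef eY e2"
  have "p + c * r \<noteq> 0 \<or> r = 0"
  proof (cases "r = 0")
    case False
    have "c > 0" using assms by linarith
    have "\<bar>c * r\<bar> = c * \<bar>r\<bar>" using \<open>c>0\<close> by (simp add: abs_mult)
    also have "\<dots> \<ge> c * 1" using False \<open>c>0\<close> by (intro mult_left_mono) auto
    finally show ?thesis using assms p_def by linarith
  qed simp
  then show ?thesis
    by (auto simp: okat_def coef_lin lv_shift1 p_def r_def algebra_simps)
qed

lemma ok_big: "c > bnd d0 f \<Longrightarrow> ok b (\<lambda>v. b v + eY v) (\<lambda>v. d0 v + c * eY v) f"
proof (induction f)
  case (FAnd f g) then show ?case using bnd_nonneg[of d0 f] bnd_nonneg[of d0 g] by auto
next
  case (FOr f g) then show ?case using bnd_nonneg[of d0 f] bnd_nonneg[of d0 g] by auto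
next
  case (FImp f g) then show ?case using bnd_nonneg[of d0 f] bnd_nonneg[of d0 g] by auto
qed (auto intro: okat_big)

definition mk :: "int \<Rightarrow> int \<Rightarrow> int \<Rightarrow> int \<Rightarrow> int \<Rightarrow> int \<Rightarrow> state" where
  "mk p x z1 z2 y1 y2 = (\<lambda>v. case v of PC \<Rightarrow> p | X \<Rightarrow> x | Z1 \<Rightarrow> z1 | Z2 \<Rightarrow> z2 | Y1 \<Rightarrow> y1 | Y2 \<Rightarrow> y2)"

lemma mk_simps[simp]: "mk p x z1 z2 y1 y2 PC = p" "mk p x z1 z2 y1 y2 X = x"
  "mk p x z1 z2 y1 y2 Z1 = z1" "mk p x z1 z2 y1 y2 Z2 = z2"
  "mk p x z1 z2 y1 y2 Y1 = y1" "mk p x z1 z2 y1 y2 Y2 = y2"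
  by (simp_all add: mk_def)

locale invar =
  fixes I :: "var qflia"
  assumes inv: "inductive_invariant_Prog I"
begin

lemma initI: "Init_Prog s \<Longrightarrow> holds s I" using inv by (simp add: inductive_invariant_Prog_def)
lemma stepI: "holds s I \<Longrightarrow> TR_Prog s t \<Longrightarrow> holds t I"
  using inv by (auto simp: inductive_invariant_Prog_def)
lemma safeI: "holds s I \<Longrightarrow> P_Prog s" using inv by (simp add: inductive_invariant_Prog_def)

lemma L1: "holds (mk 1 x (int n) z2 y1 y2) I \<Longrightarrow> holds (mk 1 x 0 z2 (y1 + int n * x) y2) I"
proof (induction n arbitrary: y1)
  case 0 then show ?case by simp
next
  case (Suc n)
  have "holds (mk 1 x (int n) z2 (y1 + x) y2) I"
    using stepI[OF Suc.prems] by (simp add: TR_Prog_def)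
  from Suc.IH[OF this] show ?case by (simp add: algebra_simps)
qed

lemma L2: "holds (mk 2 x z1 (int n) y1 y2) I \<Longrightarrow> holds (mk 2 x z1 0 y1 (y2 + int n * x)) I"
proof (induction n arbitrary: y2)
  case 0 then show ?case by simp
next
  case (Suc n)
  have "holds (mk 2 x z1 (int n) y1 (y2 + x)) I"
    using stepI[OF Suc.prems] by (simp add: TR_Prog_def)
  from Suc.IH[OF this] show ?case by (simp add: algebra_simps)
qed

lemma bad:
  assumes h: "holds (mk 1 a (a-c) (2*a) (c*a+1) 0) I" and "c \<le> a" "0 < a"
  shows False
proof -
  have "holds (mk 1 a (int (nat (a-c))) (2*a) (c*a+1) 0) I" using h assms by simp
  from L1[OF this] have "holds (mk 1 a 0 (2*a) (a*a+1) 0) I"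
    using assms by (simp add: algebra_simps)
  then have "holds (mk 2 a 0 (2*a) (a*a+1) 0) I" by (rule stepI) (simp add: TR_Prog_def)
  then have "holds (mk 2 a 0 (int (nat (2*a))) (a*a+1) 0) I" using assms by simp
  from L2[OF this] have "holds (mk 2 a 0 0 (a*a+1) (2*a*a)) I" using assms by (simp add: algebra_simps)
  then have "holds (mk 3 a 0 0 (a*a+1) (2*a*a)) I" by (rule stepI) (simp add: TR_Prog_def)
  from safeI[OF this] show False by (simp add: P_Prog_def algebra_simps)
qed

lemma good_nat: "int k + 1 \<le> a \<Longrightarrow> holds (mk 1 a (a - (int k + 1)) (2*a) ((int k + 1)*a) 0) I"
proof (induction k)
  case 0
  have "holds (mk 0 a a (2*a) 0 0) I" using 0 by (intro initI) (simp add: Init_Prog_def)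
  then have "holds (mk 1 a (a-1) (2*a) a 0) I" by (rule stepI) (use 0 in \<open>simp add: TR_Prog_def\<close>)
  then show ?case by simp
next
  case (Suc k)
  then have "holds (mk 1 a (a - (int k + 1)) (2*a) ((int k + 1)*a) 0) I" by simp
  then have "holds (mk 1 a (a - (int k + 1) - 1) (2*a) ((int k + 1)*a + a) 0) I"
    by (rule stepI) (use Suc.prems in \<open>simp add: TR_Prog_def\<close>)
  then show ?case by (simp add: algebra_simps)
qed

lemma good: "1 \<le> c \<Longrightarrow> c \<le> a \<Longrightarrow> holds (mk 1 a (a - c) (2*a) (c*a) 0) I"
  using good_nat[of "nat (c - 1)" a] by simp

lemma contra: False
proof -
  define d0 where "d0 = mk 0 1 1 2 0 0"
  define c where "c = bnd d0 I + 1"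
  define b where "b = mk 1 0 (-c) 0 0 0"
  define eY where "eY = mk 0 0 0 0 1 0"
  have c1: "c \<ge> 1" using bnd_nonneg[of d0 I] c_def by simp
  have "ok b (\<lambda>v. b v + eY v) (\<lambda>v. d0 v + c * eY v) I"
    by (rule ok_big) (simp add: c_def)
  from holds_ev[OF this] obtain N where
    N: "\<forall>a\<ge>N. holds (\<lambda>v. b v + a * (d0 v + c * eY v)) I =
                holds (\<lambda>v. (b v + eY v) + a * (d0 v + c * eY v)) I" by blast
  define a where "a = max N c"
  have ac: "c \<le> a" "a \<ge> N" "0 < a" using c1 by (auto simp: a_def)
  have e1: "(\<lambda>v. b v + a * (d0 v + c * eY v)) = mk 1 a (a - c) (2*a) (c*a) 0"
    by (rule ext, case_tac v) (auto simp: b_def d0_def eY_def algebra_simps)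
  have e2: "(\<lambda>v. (b v + eY v) + a * (d0 v + c * eY v)) = mk 1 a (a - c) (2*a) (c*a+1) 0"
    by (rule ext, case_tac v) (auto simp: b_def d0_def eY_def algebra_simps)
  have "holds (mk 1 a (a - c) (2*a) (c*a) 0) I" using good c1 ac by simp
  then have "holds (mk 1 a (a - c) (2*a) (c*a+1) 0) I" using N ac e1 e2 by metis
  then show False using bad ac by blast
qed

end

theorem mainTheorem2:
  shows "(\<forall>s. reachable_Prog s \<longrightarrow> P_Prog s) \<and> \<not> (\<exists>I :: var qflia. inductive_invariant_Prog I)"
proof
  show "\<forall>s. reachable_Prog s \<longrightarrow> P_Prog s"
  proof (intro allI impI)
    fix s assume "reachable_Prog s"
    then have "Inv s" by (rule reach_Inv)
    then show "P_Prog s" by (auto simp: Inv_def P_Prog_def)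
  qed
  show "\<not> (\<exists>I :: var qflia. inductive_invariant_Prog I)"
    using invar.contra unfolding invar_def by blast
qed

end
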